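(* In any Minkowski space $X$, if $\{\mathbf{o}\mathbf{x}_1,\dots,\mathbf{o}\mathbf{x}_n\}$ is a floating FT configuration, then $\{\mathbf{o}\mathbf{x}_1,\dots,\mathbf{o}\mathbf{x}_{n-1}\}$ is an absorbing FT configuration.
   Context: A Minkowski space is a finite-dimensional real normed space $(X,\|\cdot\|)$. A Fermat-Torricelli (FT) point of finitely many points $\mathbf{y}_1,\dots,\mathbf{y}_m$ is a minimizer of $\mathbf{x}\mapsto\sum_i\|\mathbf{x}-\mathbf{y}_i\|$. A configuration $\{\mathbf{x}_0\mathbf{x}_i: i=1,\dots,n\}$ is a set of segments from $\mathbf{x}_0$ with $\mathbf{x}_i\neq\mathbf{x}_0$; it is a floating FT configuration if $\mathbf{x}_0$ is an FT point of $\{\mathbf{x}_1,\dots,\mathbf{x}_n\}$, and an absorbing FT configuration if $\mathbf{x}_0$ is an FT point of $\{\mathbf{x}_0,\mathbf{x}_1,\dots,\mathbf{x}_n\}$. *)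

theory Defs
  imports "HOL-Analysis.Analysis"
begin

definition minkowski_space :: "'a::real_normed_vector itself \<Rightarrow> bool" where
  "minkowski_space _ \<longleftrightarrow> (\<exists>B::'a set. finite B \<and> span B = UNIV)"

definition FT_point :: "'a::real_normed_vector \<Rightarrow> 'a set \<Rightarrow> bool" where
  "FT_point x0 S \<longleftrightarrow> (\<forall>z. (\<Sum>y\<in>S. norm (x0 - y)) \<le> (\<Sum>y\<in>S. norm (z - y)))"

text \<open>A configuration from x0 is given by the finite set S of the other endpoints
  of its segments (all different from x0).\<close>
definition floating_FT_config :: "'a::real_normed_vector \<Rightarrow> 'a set \<Rightarrow> bool" where
  "floating_FT_config x0 S \<longleftrightarrow> finite S \<and> x0 \<notin> S \<and> FT_point x0 S"

definition absorbing_FT_config :: "'a::real_normed_vector \<Rightarrow> 'a set \<Rightarrow> bool" where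
  "absorbing_FT_config x0 S \<longleftrightarrow> finite S \<and> x0 \<notin> S \<and> FT_point x0 (insert x0 S)"

end

theory Submission
  imports Defs
begin

theorem corollary3p7:
  fixes x0 :: "'a::real_normed_vector" and x :: "nat \<Rightarrow> 'a" and n :: nat
  assumes "minkowski_space TYPE('a)"
    and "n \<ge> 1"
    and "inj_on x {1..n}"
    and "floating_FT_config x0 (x ` {1..n})"
  shows "absorbing_FT_config x0 (x ` {1..n-1})"
proof -
  define T where "T = x ` {1..n-1}"
  have fT: "finite T" unfolding T_def by simp
  have Sdec: "x ` {1..n} = insert (x n) T"
  proof -
    have "{1..n} = insert n {1..n-1}" using assms(2) by auto
    thus ?thesis unfolding T_def by simp
  qed
  have xnT: "x n \<notin> T"
  proof
    assume "x n \<in> T"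
    then obtain i where "i \<in> {1..n-1}" "x n = x i" unfolding T_def by auto
    moreover have "i \<in> {1..n}" "n \<in> {1..n}" "i \<noteq> n" using \<open>i \<in> {1..n-1}\<close> assms(2) by auto
    ultimately show False using assms(3) unfolding inj_on_def by metis
  qed
  have x0S: "x0 \<notin> insert (x n) T" and ft: "FT_point x0 (insert (x n) T)"
    using assms(4) Sdec unfolding floating_FT_config_def by auto
  have x0T: "x0 \<notin> T" using x0S by auto
  have "FT_point x0 (insert x0 T)"
    unfolding FT_point_def
  proof
    fix z
    have h: "(\<Sum>y\<in>T. norm (x0 - y)) + norm (x0 - x n) \<le> (\<Sum>y\<in>T. norm (z - y)) + norm (z - x n)"
      using ft[unfolded FT_point_def, rule_format, of z] fT xnT by (simp add: add.commute)
    have tri: "norm (z - x n) \<le> norm (z - x0) + norm (x0 - x n)"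
      using norm_triangle_ineq[of "z - x0" "x0 - x n"] by simp
    show "(\<Sum>y\<in>insert x0 T. norm (x0 - y)) \<le> (\<Sum>y\<in>insert x0 T. norm (z - y))"
      using h tri fT x0T by simp
  qed
  thus ?thesis unfolding absorbing_FT_config_def T_def[symmetric] using fT x0T by simp
qed

end
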